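(* For $A\in\mathcal A_n$, the following are equivalent: (1) $A$ is (the permutation matrix of) a bigrassmannian permutation; (2) $A$ has exactly one essential point.
   Context: $\mathcal A_n$ is the set of $n\times n$ alternating sign matrices (entries in $\{-1,0,1\}$, partial row and column sums in $\{0,1\}$, full row and column sums $1$); a permutation $w\in S_n$ is identified with its permutation matrix (entry $1$ at $(i,w(i))$). A permutation $w\in S_n$ is bigrassmannian if there is exactly one $i\in[n-1]$ with $w^{-1}(i)>w^{-1}(i+1)$ and exactly one $j\in[n-1]$ with $w(j)>w(j+1)$. The corner sum matrix is $\widetilde A(i,j)=\sum_{p\le i,q\le j}a_{pq}$, with $\widetilde A(i,j)=0$ if $i=0$ or $j=0$. For $i<j$, $k<l$, $R_{ij}^{kl}=\{(p,q): i\le p<j,\ k\le q<l\}$ is an essential rectangle of $A$ if for all $(p,q)\in R_{ij}^{kl}$: $\widetilde A(p,k)=\widetilde A(p,k-1)$, $\widetilde A(p,l)=\widetilde A(p,l-1)+1$, $\widetilde A(i,q)=\widetilde A(i-1,q)$, $\widetilde A(j,q)=\widetilde A(j-1,q)+1$. An essential point is an essential rectangle with $j=i+1$, $l=k+1$. *)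

theory Defs
  imports "HOL-Combinatorics.Permutations"
begin

(* n x n integer matrices are functions nat => nat => int, indexed by 1..n,
   with all entries outside [1..n] x [1..n] equal to 0. *)

definition is_asm :: "nat \<Rightarrow> (nat \<Rightarrow> nat \<Rightarrow> int) \<Rightarrow> bool" where
  "is_asm n A \<longleftrightarrow>
     (\<forall>i j. (i \<notin> {1..n} \<or> j \<notin> {1..n}) \<longrightarrow> A i j = 0) \<and>
     (\<forall>i\<in>{1..n}. \<forall>j\<in>{1..n}. A i j \<in> {-1, 0, 1}) \<and>
     (\<forall>i\<in>{1..n}. \<forall>j\<in>{1..n}. (\<Sum>q=1..j. A i q) \<in> {0, 1}) \<and>
     (\<forall>i\<in>{1..n}. \<forall>j\<in>{1..n}. (\<Sum>p=1..i. A p j) \<in> {0, 1}) \<and>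
     (\<forall>i\<in>{1..n}. (\<Sum>q=1..n. A i q) = 1) \<and>
     (\<forall>j\<in>{1..n}. (\<Sum>p=1..n. A p j) = 1)"

definition perm_mat :: "nat \<Rightarrow> (nat \<Rightarrow> nat) \<Rightarrow> nat \<Rightarrow> nat \<Rightarrow> int" where
  "perm_mat n w i j = (if i \<in> {1..n} \<and> j \<in> {1..n} \<and> w i = j then 1 else 0)"

definition bigrassmannian :: "nat \<Rightarrow> (nat \<Rightarrow> nat) \<Rightarrow> bool" where
  "bigrassmannian n w \<longleftrightarrow>
     card {i \<in> {1..<n}. inv w i > inv w (i + 1)} = 1 \<and>
     card {j \<in> {1..<n}. w j > w (j + 1)} = 1"

definition corner_sum :: "(nat \<Rightarrow> nat \<Rightarrow> int) \<Rightarrow> nat \<Rightarrow> nat \<Rightarrow> int" where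
  "corner_sum A i j = (\<Sum>p=1..i. \<Sum>q=1..j. A p q)"

definition essential_rect :: "nat \<Rightarrow> (nat \<Rightarrow> nat \<Rightarrow> int) \<Rightarrow> nat \<Rightarrow> nat \<Rightarrow> nat \<Rightarrow> nat \<Rightarrow> bool" where
  "essential_rect n A i j k l \<longleftrightarrow>
     1 \<le> i \<and> i < j \<and> j \<le> n \<and> 1 \<le> k \<and> k < l \<and> l \<le> n \<and>
     (\<forall>p\<in>{i..<j}. \<forall>q\<in>{k..<l}.
        corner_sum A p k = corner_sum A p (k - 1) \<and>
        corner_sum A p l = corner_sum A p (l - 1) + 1 \<and>
        corner_sum A i q = corner_sum A (i - 1) q \<and>
        corner_sum A j q = corner_sum A (j - 1) q + 1)"

definition essential_points :: "nat \<Rightarrow> (nat \<Rightarrow> nat \<Rightarrow> int) \<Rightarrow> (nat \<times> nat) set" where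
  "essential_points n A = {(i, k). essential_rect n A i (i + 1) k (k + 1)}"

end

theory Submission
  imports Defs
begin

definition rs :: "(nat \<Rightarrow> nat \<Rightarrow> int) \<Rightarrow> nat \<Rightarrow> nat \<Rightarrow> int" where
  "rs A i k = (\<Sum>q=1..k. A i q)"
definition cs :: "(nat \<Rightarrow> nat \<Rightarrow> int) \<Rightarrow> nat \<Rightarrow> nat \<Rightarrow> int" where
  "cs A i k = (\<Sum>p=1..i. A p k)"

lemma cs_col: "1 \<le> k \<Longrightarrow> corner_sum A p k = corner_sum A p (k - 1) + cs A p k"
proof -
  assume "1 \<le> k"
  then obtain k' where k: "k = Suc k'" by (cases k) auto
  show ?thesis unfolding k corner_sum_def cs_def by (simp add: sum.distrib)
qed

lemma cs_row: "1 \<le> p \<Longrightarrow> corner_sum A p k = corner_sum A (p - 1) k + rs A p k"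
proof -
  assume "1 \<le> p"
  then obtain p' where p: "p = Suc p'" by (cases p) auto
  show ?thesis unfolding p corner_sum_def rs_def by simp
qed

lemma rs_Suc: "rs A i (Suc k) = rs A i k + A i (Suc k)"
  unfolding rs_def by simp
lemma cs_Suc: "cs A (Suc i) k = cs A i k + A (Suc i) k"
  unfolding cs_def by simp
lemma rs_0[simp]: "rs A i 0 = 0" unfolding rs_def by simp
lemma cs_0[simp]: "cs A 0 k = 0" unfolding cs_def by simp

lemma ess_iff:
  "(i, k) \<in> essential_points n A \<longleftrightarrow>
    1 \<le> i \<and> i < n \<and> 1 \<le> k \<and> k < n \<and> cs A i k = 0 \<and> cs A i (k+1) = 1
    \<and> rs A i k = 0 \<and> rs A (i+1) k = 1"
proof -
  have e: "{i..<i+1} = {i}" "{k..<k+1} = {k}" by auto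
  show ?thesis
  proof
    assume "(i, k) \<in> essential_points n A"
    then have h: "1 \<le> i" "i < n" "1 \<le> k" "k < n"
      "corner_sum A i k = corner_sum A i (k - 1)"
      "corner_sum A i (k+1) = corner_sum A i (k + 1 - 1) + 1"
      "corner_sum A i k = corner_sum A (i - 1) k"
      "corner_sum A (i+1) k = corner_sum A (i + 1 - 1) k + 1"
      unfolding essential_points_def essential_rect_def e by auto
    have "corner_sum A i k = corner_sum A i (k - 1) + cs A i k"
         "corner_sum A i (k+1) = corner_sum A i (k + 1 - 1) + cs A i (k+1)"
         "corner_sum A i k = corner_sum A (i - 1) k + rs A i k"
         "corner_sum A (i+1) k = corner_sum A (i + 1 - 1) k + rs A (i+1) k"
      using h(1,3) cs_col[of k A i] cs_col[of "k+1" A i] cs_row[of i A k] cs_row[of "i+1" A k] by auto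
    with h show "1 \<le> i \<and> i < n \<and> 1 \<le> k \<and> k < n \<and> cs A i k = 0 \<and> cs A i (k+1) = 1
    \<and> rs A i k = 0 \<and> rs A (i+1) k = 1" by linarith
  next
    assume h: "1 \<le> i \<and> i < n \<and> 1 \<le> k \<and> k < n \<and> cs A i k = 0 \<and> cs A i (k+1) = 1
    \<and> rs A i k = 0 \<and> rs A (i+1) k = 1"
    have "corner_sum A i k = corner_sum A i (k - 1) + cs A i k"
         "corner_sum A i (k+1) = corner_sum A i (k + 1 - 1) + cs A i (k+1)"
         "corner_sum A i k = corner_sum A (i - 1) k + rs A i k"
         "corner_sum A (i+1) k = corner_sum A (i + 1 - 1) k + rs A (i+1) k"
      using h cs_col[of k A i] cs_col[of "k+1" A i] cs_row[of i A k] cs_row[of "i+1" A k] by auto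
    with h show "(i, k) \<in> essential_points n A"
      unfolding essential_points_def essential_rect_def e by auto
  qed
qed

lemma asm_out: "is_asm n A \<Longrightarrow> i \<notin> {1..n} \<or> j \<notin> {1..n} \<Longrightarrow> A i j = 0"
  unfolding is_asm_def by blast

lemma asm_rs: assumes "is_asm n A" "k \<le> n" shows "rs A i k \<in> {0,1}"
proof (cases "i \<in> {1..n} \<and> k \<ge> 1")
  case True then show ?thesis using assms unfolding is_asm_def rs_def by auto
next
  case False
  then consider "k = 0" | "i \<notin> {1..n}" by linarith
  then show ?thesis
  proof cases
    case 1 then show ?thesis by simp
  next
    case 2 then have "rs A i k = 0" unfolding rs_def using asm_out[OF assms(1)] by simp
    then show ?thesis by simp
  qed
qed

lemma asm_cs: assumes "is_asm n A" "i \<le> n" shows "cs A i k \<in> {0,1}"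
proof (cases "k \<in> {1..n} \<and> i \<ge> 1")
  case True then show ?thesis using assms unfolding is_asm_def cs_def by auto
next
  case False
  then consider "i = 0" | "k \<notin> {1..n}" by linarith
  then show ?thesis
  proof cases
    case 1 then show ?thesis by simp
  next
    case 2 then have "cs A i k = 0" unfolding cs_def using asm_out[OF assms(1)] by simp
    then show ?thesis by simp
  qed
qed

lemma asm_rs_full: "is_asm n A \<Longrightarrow> i \<in> {1..n} \<Longrightarrow> rs A i n = 1"
  unfolding is_asm_def rs_def by blast
lemma asm_cs_full: "is_asm n A \<Longrightarrow> k \<in> {1..n} \<Longrightarrow> cs A n k = 1"
  unfolding is_asm_def cs_def by blast

lemma nw_walk:
  assumes A: "is_asm n A"
  shows "i + 1 \<le> n \<Longrightarrow> k + 1 \<le> n \<Longrightarrow> rs A (i+1) k = 1 \<Longrightarrow> cs A i (k+1) = 1 \<Longrightarrow>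
    \<exists>i' k'. (i', k') \<in> essential_points n A \<and> i' \<le> i \<and> k' \<le> k"
proof (induction "i+k" arbitrary: i k rule: less_induct)
  case less
  have i1: "i \<ge> 1" proof (rule ccontr) assume "\<not> i \<ge> 1" then have "i = 0" by simp
    then show False using less.prems(4) by simp qed
  have k1: "k \<ge> 1" proof (rule ccontr) assume "\<not> k \<ge> 1" then have "k = 0" by simp
    then show False using less.prems(3) by simp qed
  have r: "rs A i k \<in> {0,1}" using asm_rs[OF A, of k i] less.prems by simp
  have c: "cs A i k \<in> {0,1}" using asm_cs[OF A, of i k] less.prems by simp
  consider "rs A i k = 0 \<and> cs A i k = 0" | "rs A i k = 1" | "cs A i k = 1" using r c by auto
  then show ?case
  proof cases
    case 1
    then have "(i, k) \<in> essential_points n A" using ess_iff[of i k n A] less.prems i1 k1 by auto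
    then show ?thesis by blast
  next
    case 2
    obtain i0 where i0: "i = Suc i0" using i1 by (cases i) auto
    have a: "rs A i (Suc k) \<in> {0,1}" using asm_rs[OF A, of "Suc k" i] less.prems by simp
    have b: "cs A i0 (Suc k) \<in> {0,1}" using asm_cs[OF A, of i0 "Suc k"] less.prems i0 by simp
    have "rs A i (Suc k) = rs A i k + A i (Suc k)" by (rule rs_Suc)
    moreover have "cs A (Suc i0) (Suc k) = cs A i0 (Suc k) + A (Suc i0) (Suc k)" by (rule cs_Suc)
    ultimately have "cs A i0 (k+1) = 1" using a b 2 less.prems(4) i0 by auto
    moreover have "rs A (i0+1) k = 1" using 2 i0 by simp
    ultimately obtain i' k' where "(i', k') \<in> essential_points n A" "i' \<le> i0" "k' \<le> k"
      using less.hyps[of i0 k] less.prems i0 by auto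
    then show ?thesis using i0 by (intro exI[of _ i'] exI[of _ k']) auto
  next
    case 3
    obtain k0 where k0: "k = Suc k0" using k1 by (cases k) auto
    have a: "cs A (Suc i) k \<in> {0,1}" using asm_cs[OF A, of "Suc i" k] less.prems by simp
    have b: "rs A (Suc i) k0 \<in> {0,1}" using asm_rs[OF A, of k0 "Suc i"] less.prems k0 by simp
    have "cs A (Suc i) k = cs A i k + A (Suc i) k" by (rule cs_Suc)
    moreover have "rs A (Suc i) (Suc k0) = rs A (Suc i) k0 + A (Suc i) (Suc k0)" by (rule rs_Suc)
    ultimately have "rs A (i+1) k0 = 1" using a b 3 less.prems(3) k0 by auto
    moreover have "cs A i (k0+1) = 1" using 3 k0 by simp
    ultimately obtain i' k' where "(i', k') \<in> essential_points n A" "i' \<le> i" "k' \<le> k0"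
      using less.hyps[of i k0] less.prems k0 by auto
    then show ?thesis using k0 by (intro exI[of _ i'] exI[of _ k']) auto
  qed
qed

lemma se_walk:
  assumes A: "is_asm n A"
  shows "1 \<le> i \<Longrightarrow> 1 \<le> k \<Longrightarrow> i \<le> n \<Longrightarrow> k \<le> n \<Longrightarrow> rs A i k = 0 \<Longrightarrow> cs A i k = 0 \<Longrightarrow>
    \<exists>i' k'. (i', k') \<in> essential_points n A \<and> i \<le> i' \<and> k \<le> k'"
proof (induction "(n - i) + (n - k)" arbitrary: i k rule: less_induct)
  case less
  have "i \<noteq> n" using asm_cs_full[OF A, of k] less.prems by auto
  then have iN: "i < n" using less.prems by simp
  have "k \<noteq> n" using asm_rs_full[OF A, of i] less.prems by auto
  then have kN: "k < n" using less.prems by simp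
  have r: "rs A (i+1) k \<in> {0,1}" using asm_rs[OF A, of k "i+1"] less.prems by simp
  have c: "cs A i (k+1) \<in> {0,1}" using asm_cs[OF A, of i "k+1"] less.prems by simp
  consider "rs A (i+1) k = 1 \<and> cs A i (k+1) = 1" | "rs A (i+1) k = 0" | "cs A i (k+1) = 0" using r c by auto
  then show ?case
  proof cases
    case 1
    then have "(i, k) \<in> essential_points n A" using ess_iff[of i k n A] less.prems iN kN by auto
    then show ?thesis by blast
  next
    case 2
    obtain k0 where k0: "k = Suc k0" using less.prems by (cases k) auto
    have a: "rs A (Suc i) k0 \<in> {0,1}" using asm_rs[OF A, of k0 "Suc i"] less.prems k0 by simp
    have b: "cs A (Suc i) k \<in> {0,1}" using asm_cs[OF A, of "Suc i" k] iN by simp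
    have "rs A (Suc i) (Suc k0) = rs A (Suc i) k0 + A (Suc i) (Suc k0)" by (rule rs_Suc)
    moreover have "cs A (Suc i) k = cs A i k + A (Suc i) k" by (rule cs_Suc)
    ultimately have "cs A (i+1) k = 0" using a b 2 less.prems(6) k0 by auto
    then obtain i' k' where "(i', k') \<in> essential_points n A" "i+1 \<le> i'" "k \<le> k'"
      using less.hyps[of "i+1" k] less.prems iN 2 by fastforce
    then show ?thesis by (intro exI[of _ i'] exI[of _ k']) auto
  next
    case 3
    obtain i0 where i0: "i = Suc i0" using less.prems by (cases i) auto
    have a: "cs A i0 (Suc k) \<in> {0,1}" using asm_cs[OF A, of i0 "Suc k"] less.prems i0 by simp
    have b: "rs A i (Suc k) \<in> {0,1}" using asm_rs[OF A, of "Suc k" i] kN by simp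
    have "cs A (Suc i0) (Suc k) = cs A i0 (Suc k) + A (Suc i0) (Suc k)" by (rule cs_Suc)
    moreover have "rs A i (Suc k) = rs A i k + A i (Suc k)" by (rule rs_Suc)
    ultimately have "rs A i (k+1) = 0" using a b 3 less.prems(5) i0 by auto
    then obtain i' k' where "(i', k') \<in> essential_points n A" "i \<le> i'" "k+1 \<le> k'"
      using less.hyps[of i "k+1"] less.prems kN 3 by fastforce
    then show ?thesis by (intro exI[of _ i'] exI[of _ k']) auto
  qed
qed

lemma ess_subset: "essential_points n A \<subseteq> {1..n} \<times> {1..n}"
  using ess_iff[of _ _ n A] by auto

lemma ess_finite: "finite (essential_points n A)"
  by (rule finite_subset[OF ess_subset]) auto

lemma neg_two:
  assumes A: "is_asm n A" and m: "A P Q = -1"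
  shows "card (essential_points n A) \<ge> 2"
proof -
  have P: "P \<in> {1..n}" and Q: "Q \<in> {1..n}" using asm_out[OF A, of P Q] m by auto
  obtain P0 where P0: "P = Suc P0" using P by (cases P) auto
  obtain Q0 where Q0: "Q = Suc Q0" using Q by (cases Q) auto
  have r1: "rs A P Q0 \<in> {0,1}" "rs A P Q \<in> {0,1}" using asm_rs[OF A] Q Q0 by auto
  have c1: "cs A P0 Q \<in> {0,1}" "cs A P Q \<in> {0,1}" using asm_cs[OF A] P P0 by auto
  have "rs A P Q = rs A P Q0 + A P Q" using rs_Suc[of A P Q0] Q0 by simp
  with r1 m have rr: "rs A P Q0 = 1" "rs A P Q = 0" by auto
  have "cs A P Q = cs A P0 Q + A P Q" using cs_Suc[of A P0 Q] P0 by simp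
  with c1 m have cc: "cs A P0 Q = 1" "cs A P Q = 0" by auto
  obtain i1 k1 where e1: "(i1, k1) \<in> essential_points n A" "i1 \<le> P0"
    using nw_walk[OF A, of P0 Q0] rr cc P Q P0 Q0 by auto
  obtain i2 k2 where e2: "(i2, k2) \<in> essential_points n A" "P \<le> i2"
    using se_walk[OF A, of P Q] rr cc P Q by auto
  have "(i1,k1) \<noteq> (i2,k2)" using e1 e2 P0 by auto
  then have "card {(i1,k1),(i2,k2)} = 2" by simp
  moreover have "card {(i1,k1),(i2,k2)} \<le> card (essential_points n A)"
    using e1 e2 by (intro card_mono ess_finite) auto
  ultimately show ?thesis by simp
qed

lemma perm_rs:
  assumes w: "w permutes {1..n}" and i: "i \<in> {1..n}"
  shows "rs (perm_mat n w) i k = (if w i \<le> k then 1 else 0)"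
proof -
  have wi: "w i \<in> {1..n}" using permutes_in_image[OF w] i by simp
  have "\<And>q. perm_mat n w i q = (if w i = q then 1 else 0)" unfolding perm_mat_def using i wi by auto
  then have "rs (perm_mat n w) i k = (\<Sum>q=1..k. if w i = q then 1 else 0)" unfolding rs_def by simp
  also have "\<dots> = (if w i \<le> k then 1 else 0)" using wi by simp
  finally show ?thesis .
qed

lemma perm_cs:
  assumes w: "w permutes {1..n}" and k: "k \<in> {1..n}"
  shows "cs (perm_mat n w) i k = (if inv w k \<le> i then 1 else 0)"
proof -
  have wk: "inv w k \<in> {1..n}" using permutes_in_image[OF permutes_inv[OF w]] k by simp
  have "\<And>p. perm_mat n w p k = (if inv w k = p then 1 else 0)"
  proof -
    fix p
    have "(p \<in> {1..n} \<and> k \<in> {1..n} \<and> w p = k) \<longleftrightarrow> inv w k = p"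
      using k wk permutes_inverses[OF w] by metis
    then show "perm_mat n w p k = (if inv w k = p then 1 else 0)" unfolding perm_mat_def by simp
  qed
  then have "cs (perm_mat n w) i k = (\<Sum>p=1..i. if inv w k = p then 1 else 0)" unfolding cs_def by simp
  also have "\<dots> = (if inv w k \<le> i then 1 else 0)" using wk by simp
  finally show ?thesis .
qed

lemma ess_perm:
  fixes w :: "nat \<Rightarrow> nat"
  assumes w: "w permutes {1..n}"
  shows "(i, k) \<in> essential_points n (perm_mat n w) \<longleftrightarrow>
    1 \<le> i \<and> i < n \<and> 1 \<le> k \<and> k < n \<and> i < inv w k \<and> inv w (k+1) \<le> i \<and> k < w i \<and> w (i+1) \<le> k"
proof (cases "1 \<le> i \<and> i < n \<and> 1 \<le> k \<and> k < n")
  case True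
  then have "rs (perm_mat n w) i k = (if w i \<le> k then 1 else 0)"
    "rs (perm_mat n w) (i+1) k = (if w (i+1) \<le> k then 1 else 0)"
    "cs (perm_mat n w) i k = (if inv w k \<le> i then 1 else 0)"
    "cs (perm_mat n w) i (k+1) = (if inv w (k+1) \<le> i then 1 else 0)"
    using perm_rs[OF w, of i k] perm_rs[OF w, of "i+1" k]
      perm_cs[OF w, of k i] perm_cs[OF w, of "k+1" i] by auto
  then show ?thesis unfolding ess_iff using True by (simp add: not_le)
next
  case False
  then show ?thesis unfolding ess_iff by auto
qed

lemma ivt_nat: "a \<le> b \<Longrightarrow> f a \<Longrightarrow> \<not> f b \<Longrightarrow> \<exists>k. a \<le> k \<and> k < b \<and> f k \<and> \<not> f (Suc k)"
proof (induction b)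
  case 0 then show ?case by simp
next
  case (Suc b)
  show ?case
  proof (cases "f b")
    case True
    have "a \<noteq> Suc b" using Suc.prems by auto
    then show ?thesis using Suc.prems True by (intro exI[of _ b]) auto
  next
    case False
    then have "a \<noteq> Suc b" using Suc.prems by auto
    then have "a \<le> b" using Suc.prems by simp
    then obtain k where "a \<le> k" "k < b" "f k" "\<not> f (Suc k)" using Suc.IH Suc.prems False by blast
    then show ?thesis by (intro exI[of _ k]) auto
  qed
qed

lemma descent_exists:
  fixes s :: "nat \<Rightarrow> nat" and n i :: nat
  assumes s: "s permutes {1..n}" and i: "1 \<le> i" "i < n" and d: "s (i+1) < s i"
  shows "\<exists>k. 1 \<le> k \<and> k < n \<and> i < inv s k \<and> inv s (k+1) \<le> i \<and> k < s i \<and> s (i+1) \<le> k"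
proof -
  have r1: "s (i+1) \<in> {1..n}" "s i \<in> {1..n}" proof -
    have "i+1 \<in> {1..n}" "i \<in> {1..n}" using i by auto
    then show "s (i+1) \<in> {1..n}" "s i \<in> {1..n}" using permutes_in_image[OF s] by blast+
  qed
  have "inv s (s (i+1)) = i + 1" "inv s (s i) = i" using permutes_inverses(2)[OF s] by simp_all
  then have h: "i < inv s (s (i+1))" "\<not> i < inv s (s i)" by auto
  have dd: "s (i+1) \<le> s i" using d by simp
  have "\<exists>k. s (i+1) \<le> k \<and> k < s i \<and> i < inv s k \<and> \<not> i < inv s (Suc k)"
    using ivt_nat[of "s (i+1)" "s i" "\<lambda>k. i < inv s k", OF dd h] .
  then obtain k where k: "s (i+1) \<le> k" "k < s i" "i < inv s k" "\<not> i < inv s (Suc k)"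
    by blast
  show ?thesis using k r1 by (intro exI[of _ k]) auto
qed

lemma perm_main:
  fixes w :: "nat \<Rightarrow> nat"
  assumes w: "w permutes {1..n}"
  shows "card (essential_points n (perm_mat n w)) = 1 \<longleftrightarrow> bigrassmannian n w"
proof -
  define E where "E = essential_points n (perm_mat n w)"
  define D1 where "D1 = {i \<in> {1..<n}. inv w i > inv w (i + 1)}"
  define D2 where "D2 = {j \<in> {1..<n}. w j > w (j + 1)}"
  have wi: "inv w permutes {1..n}" using permutes_inv[OF w] .
  have ii: "inv (inv w) = w" using permutes_inv_inv[OF w] .
  have E1: "\<And>i k. (i,k) \<in> E \<Longrightarrow> i \<in> D2 \<and> k \<in> D1"
    unfolding E_def D1_def D2_def ess_perm[OF w] by auto
  have E2: "\<And>i. i \<in> D2 \<Longrightarrow> \<exists>k. (i,k) \<in> E"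
  proof -
    fix i assume "i \<in> D2"
    then obtain k where "1 \<le> k \<and> k < n \<and> i < inv w k \<and> inv w (k+1) \<le> i \<and> k < w i \<and> w (i+1) \<le> k"
      using descent_exists[OF w, of i] unfolding D2_def by auto
    then show "\<exists>k. (i,k) \<in> E" unfolding E_def ess_perm[OF w] using \<open>i \<in> D2\<close> unfolding D2_def by auto
  qed
  have E3: "\<And>k. k \<in> D1 \<Longrightarrow> \<exists>i. (i,k) \<in> E"
  proof -
    fix k assume "k \<in> D1"
    then obtain i where "1 \<le> i \<and> i < n \<and> k < inv (inv w) i \<and> inv (inv w) (i+1) \<le> k \<and> i < inv w k \<and> inv w (k+1) \<le> i"
      using descent_exists[OF wi, of k] unfolding D1_def by auto
    then show "\<exists>i. (i,k) \<in> E" unfolding E_def ess_perm[OF w] ii using \<open>k \<in> D1\<close> unfolding D1_def by auto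
  qed
  have fE: "finite E" unfolding E_def by (rule ess_finite)
  show ?thesis unfolding E_def[symmetric] bigrassmannian_def D1_def[symmetric] D2_def[symmetric]
  proof
    assume "card E = 1"
    then obtain a b where Eab: "E = {(a,b)}" by (metis card_1_singletonE surj_pair)
    have "a \<in> D2" "b \<in> D1" using E1[of a b] Eab by auto
    have "D2 = {a}"
    proof (intro equalityI subsetI)
      fix i assume "i \<in> D2" then obtain k where "(i,k) \<in> E" using E2 by blast
      then show "i \<in> {a}" using Eab by simp
    qed (use \<open>a \<in> D2\<close> in simp)
    moreover have "D1 = {b}"
    proof (intro equalityI subsetI)
      fix k assume "k \<in> D1" then obtain i where "(i,k) \<in> E" using E3 by blast
      then show "k \<in> {b}" using Eab by simp
    qed (use \<open>b \<in> D1\<close> in simp)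
    ultimately show "card D1 = 1 \<and> card D2 = 1" by simp
  next
    assume "card D1 = 1 \<and> card D2 = 1"
    then obtain a b where "D2 = {a}" "D1 = {b}" by (metis card_1_singletonE)
    then have sub: "E \<subseteq> {(a,b)}" using E1 by auto
    obtain k where "(a,k) \<in> E" using E2 \<open>D2 = {a}\<close> by blast
    then have "E = {(a,b)}" using sub by auto
    then show "card E = 1" by simp
  qed
qed

lemma unique_one:
  fixes f :: "nat \<Rightarrow> int"
  assumes fin: "finite S" and v: "\<forall>x\<in>S. f x \<in> {0,1}" and su: "sum f S = 1"
  shows "\<exists>!x. x \<in> S \<and> f x = 1"
proof -
  have ex: "\<exists>x. x \<in> S \<and> f x = 1"
  proof (rule ccontr)
    assume "\<not> ?thesis"
    then have "\<forall>x\<in>S. f x = 0" using v by auto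
    then have "sum f S = 0" by simp
    then show False using su by simp
  qed
  have un: "x = y" if "x \<in> S" "f x = 1" "y \<in> S" "f y = 1" for x y
  proof (rule ccontr)
    assume "x \<noteq> y"
    then have "sum f {x,y} = 2" using that by simp
    moreover have "sum f {x,y} \<le> sum f S"
      using that v fin by (intro sum_mono2) auto
    ultimately show False using su by simp
  qed
  show ?thesis using ex un by blast
qed

lemma asm_perm:
  assumes A: "is_asm n A" and nn: "\<forall>i j. A i j \<noteq> -1"
  shows "\<exists>w. w permutes {1..n} \<and> A = perm_mat n w"
proof -
  have v: "\<And>i j. i \<in> {1..n} \<Longrightarrow> j \<in> {1..n} \<Longrightarrow> A i j \<in> {0,1}"
  proof -
    fix i j assume i: "i \<in> {1..n}" and j: "j \<in> {1..n}"
    have "A i j \<in> {-1,0,1}" using A i j unfolding is_asm_def by blast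
    then show "A i j \<in> {0,1}" using nn by auto
  qed
  have row: "\<And>i. i \<in> {1..n} \<Longrightarrow> \<exists>!j. j \<in> {1..n} \<and> A i j = 1"
  proof -
    fix i assume i: "i \<in> {1..n}"
    have s1: "(\<Sum>q=1..n. A i q) = 1" using A i unfolding is_asm_def by blast
    have v1: "\<forall>x\<in>{1..n}. A i x \<in> {0,1}" using v i by blast
    show "\<exists>!j. j \<in> {1..n} \<and> A i j = 1"
      using unique_one[of "{1..n}" "\<lambda>q. A i q", OF _ v1 s1] by simp
  qed
  have col: "\<And>j. j \<in> {1..n} \<Longrightarrow> \<exists>!i. i \<in> {1..n} \<and> A i j = 1"
  proof -
    fix j assume j: "j \<in> {1..n}"
    have s1: "(\<Sum>p=1..n. A p j) = 1" using A j unfolding is_asm_def by blast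
    have v1: "\<forall>x\<in>{1..n}. A x j \<in> {0,1}" using v j by blast
    show "\<exists>!i. i \<in> {1..n} \<and> A i j = 1"
      using unique_one[of "{1..n}" "\<lambda>p. A p j", OF _ v1 s1] by simp
  qed
  define w where "w i = (if i \<in> {1..n} then (THE j. j \<in> {1..n} \<and> A i j = 1) else i)" for i
  have wp: "\<And>i. i \<in> {1..n} \<Longrightarrow> w i \<in> {1..n} \<and> A i (w i) = 1"
  proof -
    fix i assume i: "i \<in> {1..n}"
    show "w i \<in> {1..n} \<and> A i (w i) = 1" unfolding w_def using i theI'[OF row[OF i]] by simp
  qed
  have inj: "inj_on w {1..n}"
  proof (rule inj_onI)
    fix x y assume x: "x \<in> {1..n}" and y: "y \<in> {1..n}" and e: "w x = w y"
    have "A x (w x) = 1" "A y (w x) = 1" "w x \<in> {1..n}" using wp[OF x] wp[OF y] e by auto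
    then show "x = y" using col[of "w x"] x y by blast
  qed
  have sub: "w ` {1..n} \<subseteq> {1..n}" using wp by blast
  have img: "w ` {1..n} = {1..n}"
    using endo_inj_surj[OF _ sub inj] by simp
  have bb: "bij_betw w {1..n} {1..n}" unfolding bij_betw_def using inj img by blast
  have out: "\<And>x. x \<notin> {1..n} \<Longrightarrow> w x = x" unfolding w_def by (simp only: if_False)
  have perm: "w permutes {1..n}" using bij_imp_permutes[OF bb out] .
  have "A = perm_mat n w"
  proof (intro ext)
    fix i j
    show "A i j = perm_mat n w i j"
    proof (cases "i \<in> {1..n} \<and> j \<in> {1..n}")
      case True
      have u: "A i j = 1 \<Longrightarrow> j = w i" using row[of i] wp[of i] True by blast
      have "A i j = (if w i = j then 1 else 0)"
      proof (cases "w i = j")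
        case True2: True
        then show ?thesis using wp[of i] True by simp
      next
        case False2: False
        then show ?thesis using u v[of i j] True by auto
      qed
      then show ?thesis unfolding perm_mat_def using True by simp
    next
      case False
      then show ?thesis using asm_out[OF A, of i j] unfolding perm_mat_def by auto
    qed
  qed
  then show ?thesis using perm by blast
qed

theorem mainTheorem8:
  fixes n :: nat and A :: "nat \<Rightarrow> nat \<Rightarrow> int"
  assumes "is_asm n A"
  shows "(\<exists>w. w permutes {1..n} \<and> bigrassmannian n w \<and> A = perm_mat n w)
         \<longleftrightarrow> card (essential_points n A) = 1"
proof
  assume "\<exists>w. w permutes {1..n} \<and> bigrassmannian n w \<and> A = perm_mat n w"
  then obtain w where "w permutes {1..n}" "bigrassmannian n w" "A = perm_mat n w" by blast
  then show "card (essential_points n A) = 1" using perm_main[of w n] by simp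
next
  assume c: "card (essential_points n A) = 1"
  have "\<forall>i j. A i j \<noteq> -1"
  proof (intro allI notI)
    fix i j assume "A i j = -1"
    then have "card (essential_points n A) \<ge> 2" using neg_two[OF assms, of i j] by simp
    then show False using c by simp
  qed
  then obtain w where w: "w permutes {1..n}" "A = perm_mat n w" using asm_perm[OF assms] by blast
  then have "bigrassmannian n w" using perm_main[OF w(1)] c by simp
  then show "\<exists>w. w permutes {1..n} \<and> bigrassmannian n w \<and> A = perm_mat n w" using w by blast
qed

end
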